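(* Let $\mathcal{R}=\{z\in\mathbb{C}:\Re(z)>0\}$ and let $\Phi:\mathcal{R}\to\mathbb{C}$ be analytic and satisfy: (a) for all $0<a<b<\infty$, $\lim_{y\to\pm\infty} e^{-\pi|y|}\int_a^b\left|\frac{\Phi(x+iy)}{x+iy}\right|\mathrm{d}x=0$; (b) for every $\eta>0$, $\sup_{x\ge\eta}\int_{-\infty}^\infty\left|\frac{\Phi(x+iy)}{x+iy}\right|e^{-\pi|y|}\,\mathrm{d}y<\infty$; (c) $\lim_{x\to\infty}\int_{-\infty}^\infty\left|\frac{\Phi(x+iy)}{x+iy}\right|e^{-\pi|y|}\,\mathrm{d}y=0$. Let $\mathcal{K}(\Phi,z)=\lim_{N\to\infty}\left(\frac{\cos\pi z}{\pi}\right)\sum_{n=1}^N(-1)^n\left(\frac{\Phi(n-\frac12)}{z-n+\frac12}-\frac{\Phi(n-\frac12)}{z+n-\frac12}\right)$ (an entire function, the limit being uniform on compact sets). For $\beta>0$, $\beta-\frac12\notin\mathbb{Z}$ and $|\Re(z)|\neq\beta$, let $I(\beta,\Phi;z)=\frac{1}{2\pi i}\int_{\beta-i\infty}^{\beta+i\infty}\left(\frac{\cos\pi z}{\cos\pi w}\right)\left(\frac{2w}{z^2-w^2}\right)\Phi(w)\,\mathrm{d}w$. If $0<\beta<\frac12$, then $\Phi(z)-\mathcal{K}(\Phi,z)=I(\beta,\Phi;z)$ for all $z$ with $\Re(z)>\beta$, and $-\mathcal{K}(\Phi,z)=I(\beta,\Phi;z)$ for all $z$ with $|\Re(z)|<\beta$.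 *)

theory Defs
  imports "HOL-Analysis.Analysis"
begin

text \<open>The entire function z \<mapsto> cos(pi z)/(z - c), with its removable singularity
  at z = c filled in by its limit value -pi sin(pi c).\<close>
definition cos_div :: "complex \<Rightarrow> complex \<Rightarrow> complex" where
  "cos_div c z = (if z = c then - of_real pi * sin (of_real pi * c)
                  else cos (of_real pi * z) / (z - c))"

definition K_fun :: "(complex \<Rightarrow> complex) \<Rightarrow> complex \<Rightarrow> complex" where
  "K_fun \<Phi> z = lim (\<lambda>N. (1 / of_real pi) *
      (\<Sum>n=1..N. (-1) ^ n *
         (\<Phi> (of_nat n - 1/2) * cos_div (of_nat n - 1/2) z
          - \<Phi> (of_nat n - 1/2) * cos_div (- (of_nat n - 1/2)) z)))"

text \<open>I(beta, Phi; z) = (1/(2 pi i)) int_{beta - i inf}^{beta + i inf} ... dw, with w = beta + i y,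
  dw = i dy, so it equals (1/(2 pi)) int_R F(beta + i y) dy (absolutely convergent Lebesgue integral).\<close>
definition I_fun :: "real \<Rightarrow> (complex \<Rightarrow> complex) \<Rightarrow> complex \<Rightarrow> complex" where
  "I_fun \<beta> \<Phi> z = (1 / (2 * of_real pi * \<i>)) *
      (LINT y|lborel. \<i> * (let w = Complex \<beta> y in
          (cos (of_real pi * z) / cos (of_real pi * w)) * (2 * w / (z^2 - w^2)) * \<Phi> w))"

end

theory Submission
  imports Defs "HOL-Complex_Analysis.Complex_Analysis"
begin



lemma norm_cos_sq': "(norm (cos (Complex a b)))^2 = (cos a)^2 + ((exp b - exp (-b))/2)^2"
  using norm_cos_squared[of "Complex a b"] by (simp add: exp_minus field_simps power2_eq_square)

lemma norm_cos_ge1: "norm (cos (Complex a b)) \<ge> \<bar>cos a\<bar> * exp \<bar>b\<bar> / 2"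
proof -
  have c: "(cos a)^2 \<le> 1" by (simp add: abs_square_le_1)
  have e: "exp \<bar>b\<bar> \<le> exp b + exp (-b)" by (cases "b \<ge> 0") auto
  have "(\<bar>cos a\<bar> * exp \<bar>b\<bar> / 2)^2 = (cos a)^2 * (exp \<bar>b\<bar>/2)^2"
    by (simp add: power_mult_distrib power_divide)
  also have "\<dots> \<le> (cos a)^2 * ((exp b + exp (-b))/2)^2"
    using e by (intro mult_left_mono power_mono) auto
  also have "\<dots> = (cos a)^2 + (cos a)^2 * ((exp b - exp (-b))/2)^2"
    by (simp add: power2_eq_square field_simps exp_minus)
  also have "\<dots> \<le> (cos a)^2 + ((exp b - exp (-b))/2)^2"
    using c by (intro add_left_mono mult_left_le_one_le) auto
  also have "\<dots> = (norm (cos (Complex a b)))^2" by (rule norm_cos_sq'[symmetric])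
  finally show ?thesis by (rule power2_le_imp_le) simp
qed

lemma aux_lin: "(u::real) \<le> 1/2 \<Longrightarrow> 1 \<le> v \<Longrightarrow> v/4 \<le> (v - u)/2" by argo

lemma norm_cos_ge2: assumes "\<bar>b\<bar> \<ge> 1" shows "norm (cos (Complex a b)) \<ge> exp \<bar>b\<bar> / 4"
proof -
  have "exp \<bar>b\<bar> / 4 \<le> \<bar>exp b - exp (-b)\<bar> / 2"
  proof (cases "b \<ge> 0")
    case True
    have 2: "exp (-1::real) \<le> 1/2" using exp_ge_add_one_self[of 1] by (simp add: exp_minus field_simps)
    have 1: "exp (-b) \<le> 1/2" by (rule order_trans[OF _ 2]) (use True assms in simp)
    have 3: "exp b \<ge> 1" using True by simp
    have 4: "exp \<bar>b\<bar> = exp b" using True by simp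
    have "exp \<bar>b\<bar> / 4 \<le> (exp b - exp (-b)) / 2" unfolding 4 by (rule aux_lin[OF 1 3])
    also have "\<dots> \<le> \<bar>exp b - exp (-b)\<bar> / 2" by (intro divide_right_mono) auto
    finally show ?thesis .
  next
    case False
    have 2: "exp (-1::real) \<le> 1/2" using exp_ge_add_one_self[of 1] by (simp add: exp_minus field_simps)
    have 1: "exp b \<le> 1/2" by (rule order_trans[OF _ 2]) (use False assms in simp)
    have 3: "exp (-b) \<ge> 1" using False by simp
    have 4: "exp \<bar>b\<bar> = exp (-b)" using False by simp
    have "exp \<bar>b\<bar> / 4 \<le> (exp (-b) - exp b) / 2" unfolding 4 by (rule aux_lin[OF 1 3])
    also have "\<dots> \<le> \<bar>exp b - exp (-b)\<bar> / 2" by (intro divide_right_mono) auto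
    finally show ?thesis .
  qed
  also have "\<dots> \<le> norm (cos (Complex a b))"
  proof -
    have "(\<bar>exp b - exp (-b)\<bar> / 2)^2 \<le> (norm (cos (Complex a b)))^2"
      unfolding norm_cos_sq' by (simp add: power_divide)
    thus ?thesis by (rule power2_le_imp_le) simp
  qed
  finally show ?thesis .
qed

lemma rat_bound:
  fixes z w :: complex
  assumes "w \<noteq> 0" "\<delta> > 0" "norm (z - w) \<ge> \<delta>" "norm (z + w) \<ge> \<delta>"
  shows "norm (2 * w / (z^2 - w^2)) \<le> (8 + 8 * norm z ^ 2 / \<delta>^2) / norm w"
proof -
  have fac: "z^2 - w^2 = (z - w) * (z + w)" by (simp add: algebra_simps power2_eq_square)
  have nw: "norm w > 0" using assms by simp
  have "norm (2 * w / (z^2 - w^2)) = 2 * norm w / (norm (z - w) * norm (z + w))"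
    by (simp add: fac norm_divide norm_mult)
  also have "\<dots> \<le> (8 + 8 * norm z ^ 2 / \<delta>^2) / norm w"
  proof (cases "norm w \<ge> 2 * norm z")
    case True
    have a: "norm (z - w) \<ge> norm w / 2" using norm_triangle_ineq2[of w z] True
      by (simp add: norm_minus_commute)
    have b: "norm (z + w) \<ge> norm w / 2" using norm_triangle_ineq2[of w "-z"] True
      by (simp add: add.commute)
    have "norm w / 2 * (norm w / 2) \<le> norm (z - w) * norm (z + w)"
      using a b nw by (intro mult_mono) auto
    hence "2 * norm w / (norm (z - w) * norm (z + w)) \<le> 2 * norm w / (norm w / 2 * (norm w / 2))"
      using nw a b by (intro divide_left_mono mult_pos_pos) auto
    also have "\<dots> = 8 / norm w" using nw by (simp add: field_simps)
    also have "\<dots> \<le> (8 + 8 * norm z ^ 2 / \<delta>^2) / norm w"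
      using nw assms by (intro divide_right_mono) auto
    finally show ?thesis .
  next
    case False
    have "\<delta> * \<delta> \<le> norm (z - w) * norm (z + w)" using assms by (intro mult_mono) auto
    hence "2 * norm w / (norm (z - w) * norm (z + w)) \<le> 2 * norm w / (\<delta> * \<delta>)"
      using nw assms by (intro divide_left_mono mult_pos_pos) (auto intro: order_less_le_trans)
    also have "\<dots> = 2 * norm w ^ 2 / \<delta>^2 / norm w" using nw by (simp add: field_simps power2_eq_square)
    also have "\<dots> \<le> (8 + 8 * norm z ^ 2 / \<delta>^2) / norm w"
    proof (intro divide_right_mono)
      have "norm w ^ 2 \<le> (2 * norm z)^2" using False nw by (intro power_mono) auto
      hence "2 * norm w ^ 2 / \<delta>^2 \<le> 8 * norm z ^ 2 / \<delta>^2" using assms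
        by (intro divide_right_mono) (auto simp: power_mult_distrib)
      thus "2 * norm w ^ 2 / \<delta>^2 \<le> 8 + 8 * norm z ^ 2 / \<delta>^2" by simp
    qed simp
    finally show ?thesis .
  qed
  finally show ?thesis .
qed




definition Fz :: "(complex \<Rightarrow> complex) \<Rightarrow> complex \<Rightarrow> complex \<Rightarrow> complex" where
  "Fz \<Phi> z w = cos (of_real pi * z) / cos (of_real pi * w) * (2 * w / (z^2 - w^2)) * \<Phi> w"

lemma cos_pi_Complex: "cos (of_real pi * Complex x y) = cos (Complex (pi * x) (pi * y))"
proof -
  have "of_real pi * Complex x y = Complex (pi * x) (pi * y)" by (simp add: complex_eq_iff)
  thus ?thesis by simp
qed

lemma norm_cos_pi_ge1: "norm (cos (of_real pi * Complex x y)) \<ge> \<bar>cos (pi * x)\<bar> / 2 * exp (pi * \<bar>y\<bar>)"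
  using norm_cos_ge1[of "pi * x" "pi * y"] by (simp add: cos_pi_Complex abs_mult)

lemma norm_cos_pi_ge2: "\<bar>y\<bar> \<ge> 1 \<Longrightarrow> norm (cos (of_real pi * Complex x y)) \<ge> 1/4 * exp (pi * \<bar>y\<bar>)"
proof -
  assume "\<bar>y\<bar> \<ge> 1"
  hence "1 * 1 \<le> pi * \<bar>y\<bar>" using pi_gt3 by (intro mult_mono) auto
  hence "\<bar>pi * y\<bar> \<ge> 1" by (simp add: abs_mult)
  from norm_cos_ge2[OF this, of "pi * x"] show ?thesis by (simp add: cos_pi_Complex abs_mult)
qed

lemma Fz_bound:
  fixes z w :: complex
  assumes "w \<noteq> 0" "\<delta> > 0" "norm (z - w) \<ge> \<delta>" "norm (z + w) \<ge> \<delta>" "m > 0"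
    "norm (cos (of_real pi * w)) \<ge> m * exp (pi * \<bar>Im w\<bar>)"
  shows "norm (Fz \<Phi> z w) \<le> norm (cos (of_real pi * z)) / m * (8 + 8 * norm z ^ 2 / \<delta>^2)
            * (norm (\<Phi> w / w) * exp (- pi * \<bar>Im w\<bar>))"
proof -
  define M where "M = 8 + 8 * norm z ^ 2 / \<delta>^2"
  define E where "E = exp (pi * \<bar>Im w\<bar>)"
  have E: "E > 0" by (simp add: E_def)
  have cw: "norm (cos (of_real pi * w)) \<ge> m * E" using assms by (simp add: E_def)
  have cw0: "norm (cos (of_real pi * w)) > 0" using cw E assms(5) by (smt (verit) mult_pos_pos)
  have r: "norm (2 * w / (z^2 - w^2)) \<le> M / norm w" unfolding M_def by (rule rat_bound) (use assms in auto)
  have "norm (Fz \<Phi> z w) = norm (cos (of_real pi * z)) / norm (cos (of_real pi * w)) * norm (2 * w / (z^2 - w^2)) * norm (\<Phi> w)"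
    by (simp add: Fz_def norm_mult norm_divide)
  also have "\<dots> \<le> norm (cos (of_real pi * z)) / (m * E) * (M / norm w) * norm (\<Phi> w)"
    by (intro mult_right_mono mult_mono divide_left_mono r cw) (use E assms cw0 in auto)
  also have "\<dots> = norm (cos (of_real pi * z)) / m * M * (norm (\<Phi> w / w) * exp (- pi * \<bar>Im w\<bar>))"
    using E assms by (simp add: E_def norm_divide exp_minus field_simps)
  finally show ?thesis unfolding M_def .
qed

lemma contour_integral_linepath_same_Im:
  assumes "a < b"
  shows "contour_integral (linepath (Complex a t) (Complex b t)) f = integral {a..b} (\<lambda>x. f (Complex x t))"
proof -
  have "contour_integral (linepath (Complex a t) (Complex b t)) f =
         (Complex b t - Complex a t) * integral {0..1} (\<lambda>x. f (linepath (Complex a t) (Complex b t) x))"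
    by (simp add: contour_integral_integral)
  also have "Complex b t - Complex a t = of_real (b - a)"
    by (simp add: complex_eq_iff)
  also have "integral {0..1} (\<lambda>x. f (linepath (Complex a t) (Complex b t) x)) =
             integral {0..1} (\<lambda>x. f (Complex (linepath a b x) t))"
    by (intro arg_cong[where f="integral {0..1}"] ext arg_cong[where f=f]) (simp add: linepath_def complex_eq_iff algebra_simps)
  also have "\<dots> = integral {0..(b - a) / (b - a)} (\<lambda>x. f (Complex (a + (b - a) * x) t))"
    using \<open>a < b\<close> by (simp add: algebra_simps linepath_def)
  also have "{0..(b - a) / (b - a)} = (\<lambda>x. x / (b - a)) ` {0..b - a}"
    using \<open>a < b\<close> by simp
  also have "integral \<dots> (\<lambda>x. f (Complex (a + (b - a) * x) t)) =
             integral {a-a..b-a} (\<lambda>x. f (Complex (x + a) t)) / of_real (b - a)"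
    using \<open>a < b\<close> by (subst integral_stretch_real) (auto simp: scaleR_conv_of_real add_ac)
  also have "\<dots> = integral {a..b} (\<lambda>x. f (Complex x t)) / of_real (b - a)"
    by (subst integral_shift_real_ivl) (rule refl)
  finally show ?thesis
    using \<open>a < b\<close> by simp
qed




lemma Complex_cont_y: "continuous_on A (\<lambda>y. Complex x y)"
  unfolding Complex_eq by (intro continuous_intros)

lemma Complex_cont_x: "continuous_on A (\<lambda>x. Complex x y)"
  unfolding Complex_eq by (intro continuous_intros)

locale phi_setup =
  fixes \<Phi> :: "complex \<Rightarrow> complex" and \<beta> :: real
  assumes holo: "\<Phi> holomorphic_on {z. Re z > 0}"
    and cond_a: "\<And>a b. 0 < a \<Longrightarrow> a < b \<Longrightarrow>
        ((\<lambda>y. ennreal (exp (- pi * \<bar>y\<bar>)) *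
            (\<integral>\<^sup>+ x\<in>{a..b}. ennreal (cmod (\<Phi> (Complex x y) / Complex x y)) \<partial>lborel))
          \<longlongrightarrow> 0) at_top
      \<and> ((\<lambda>y. ennreal (exp (- pi * \<bar>y\<bar>)) *
            (\<integral>\<^sup>+ x\<in>{a..b}. ennreal (cmod (\<Phi> (Complex x y) / Complex x y)) \<partial>lborel))
          \<longlongrightarrow> 0) at_bot"
    and cond_b: "\<And>\<eta>. \<eta> > 0 \<Longrightarrow>
        (SUP x\<in>{\<eta>..}. \<integral>\<^sup>+ y. ennreal (cmod (\<Phi> (Complex x y) / Complex x y) * exp (- pi * \<bar>y\<bar>)) \<partial>lborel) < \<infinity>"
    and cond_c: "((\<lambda>x. \<integral>\<^sup>+ y. ennreal (cmod (\<Phi> (Complex x y) / Complex x y) * exp (- pi * \<bar>y\<bar>)) \<partial>lborel)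
          \<longlongrightarrow> 0) at_top"
    and beta: "0 < \<beta>" "\<beta> < 1/2"
begin

definition hl :: "real \<Rightarrow> real \<Rightarrow> real" where
  "hl x y = cmod (\<Phi> (Complex x y) / Complex x y) * exp (- pi * \<bar>y\<bar>)"

lemma hl_nonneg: "hl x y \<ge> 0" by (simp add: hl_def)

lemma Phi_cont: "continuous_on {w. Re w > 0} \<Phi>"
  using holo holomorphic_on_imp_continuous_on by blast

lemma Phi_line_cont: "0 < x \<Longrightarrow> continuous_on A (\<lambda>y. \<Phi> (Complex x y))"
  by (rule continuous_on_compose2[OF Phi_cont Complex_cont_y]) auto

lemma Phi_hline_cont: "A \<subseteq> {0<..} \<Longrightarrow> continuous_on A (\<lambda>x. \<Phi> (Complex x y))"
  by (rule continuous_on_compose2[OF Phi_cont Complex_cont_x]) auto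

lemma hl_cont: "0 < x \<Longrightarrow> continuous_on UNIV (hl x)"
  unfolding hl_def[abs_def]
  by (intro continuous_intros Phi_line_cont Complex_cont_y) (auto simp: complex_eq_iff)

lemma hl_int: assumes "0 < x"
  shows "integrable lborel (hl x)" "(\<integral>\<^sup>+y. ennreal (hl x y) \<partial>lborel) = ennreal (LINT y|lborel. hl x y)"
proof -
  have meas: "hl x \<in> borel_measurable lborel"
    using borel_measurable_continuous_onI[OF hl_cont[OF assms]] by simp
  have "(\<integral>\<^sup>+y. ennreal (hl x y) \<partial>lborel) \<le>
     (SUP x\<in>{x..}. \<integral>\<^sup>+ y. ennreal (cmod (\<Phi> (Complex x y) / Complex x y) * exp (- pi * \<bar>y\<bar>)) \<partial>lborel)"
    unfolding hl_def by (rule SUP_upper2[of x]) auto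
  also have "\<dots> < \<infinity>" using cond_b[OF assms] .
  finally have fin: "(\<integral>\<^sup>+y. ennreal (hl x y) \<partial>lborel) < \<infinity>" .
  show int: "integrable lborel (hl x)"
    by (rule integrableI_bounded[OF meas]) (use fin hl_nonneg in simp)
  show "(\<integral>\<^sup>+y. ennreal (hl x y) \<partial>lborel) = ennreal (LINT y|lborel. hl x y)"
    by (rule nn_integral_eq_integral[OF int]) (simp add: hl_nonneg)
qed

lemma vert:
  assumes x: "0 < x" and d: "\<delta> > 0" "\<And>y. \<delta> \<le> norm (z - Complex x y)" "\<And>y. \<delta> \<le> norm (z + Complex x y)"
   and c: "cos (pi * x) \<noteq> 0"
  defines "K \<equiv> norm (cos (of_real pi * z)) / (\<bar>cos (pi*x)\<bar>/2) * (8 + 8 * norm z ^ 2 / \<delta>^2)"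
  shows "integrable lborel (\<lambda>y. \<i> * Fz \<Phi> z (Complex x y))"
    and "norm (LINT y|lborel. \<i> * Fz \<Phi> z (Complex x y)) \<le> K * (LINT y|lborel. hl x y)"
    and "((\<lambda>T. contour_integral (linepath (Complex x (-T)) (Complex x T)) (Fz \<Phi> z))
           \<longlongrightarrow> (LINT y|lborel. \<i> * Fz \<Phi> z (Complex x y))) at_top"
proof -
  have K: "K \<ge> 0" unfolding K_def by simp
  have nz: "cos (of_real pi * Complex x y) \<noteq> 0" for y
  proof -
    have "0 < \<bar>cos (pi * x)\<bar> / 2 * exp (pi * \<bar>y\<bar>)" using c by simp
    also have "\<dots> \<le> norm (cos (of_real pi * Complex x y))" by (rule norm_cos_pi_ge1)
    finally show ?thesis by auto
  qed
  have nz2: "z^2 - (Complex x y)^2 \<noteq> 0" for y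
  proof -
    have a: "\<delta> \<le> norm (z - Complex x y)" "\<delta> \<le> norm (z + Complex x y)" by (rule d(2), rule d(3))
    have "z - Complex x y \<noteq> 0" "z + Complex x y \<noteq> 0" using a d(1) by auto
    moreover have "z^2 - (Complex x y)^2 = (z - Complex x y) * (z + Complex x y)"
      by (simp add: algebra_simps power2_eq_square)
    ultimately show ?thesis by simp
  qed
  have cont: "continuous_on UNIV (\<lambda>y. Fz \<Phi> z (Complex x y))"
    unfolding Fz_def
    by (intro continuous_intros Phi_line_cont Complex_cont_y x) (use nz nz2 in auto)
  have bnd: "norm (Fz \<Phi> z (Complex x y)) \<le> K * hl x y" for y
  proof -
    have "norm (Fz \<Phi> z (Complex x y)) \<le> norm (cos (of_real pi * z)) / (\<bar>cos (pi*x)\<bar>/2) * (8 + 8 * norm z ^ 2 / \<delta>^2)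
            * (norm (\<Phi> (Complex x y) / Complex x y) * exp (- pi * \<bar>Im (Complex x y)\<bar>))"
      by (rule Fz_bound) (use x d c norm_cos_pi_ge1[of x y] in \<open>auto simp: complex_eq_iff\<close>)
    thus ?thesis by (simp add: K_def hl_def)
  qed
  have measF: "(\<lambda>y. Fz \<Phi> z (Complex x y)) \<in> borel_measurable lborel"
    using borel_measurable_continuous_onI[OF cont] by simp
  have intF: "integrable lborel (\<lambda>y. Fz \<Phi> z (Complex x y))"
  proof (rule Bochner_Integration.integrable_bound[OF integrable_mult_right[OF hl_int(1)[OF x], of K] measF])
    show "AE y in lborel. norm (Fz \<Phi> z (Complex x y)) \<le> norm (K * hl x y)"
      using bnd K hl_nonneg by (auto simp: abs_of_nonneg)
  qed
  show int: "integrable lborel (\<lambda>y. \<i> * Fz \<Phi> z (Complex x y))"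
    by (rule integrable_mult_right[OF intF])
  show "norm (LINT y|lborel. \<i> * Fz \<Phi> z (Complex x y)) \<le> K * (LINT y|lborel. hl x y)"
  proof -
    have "norm (LINT y|lborel. \<i> * Fz \<Phi> z (Complex x y)) \<le> (LINT y|lborel. K * hl x y)"
      by (rule Bochner_Integration.integral_norm_bound_integral[OF int integrable_mult_right[OF hl_int(1)[OF x]]])
         (simp add: norm_mult bnd)
    thus ?thesis by simp
  qed
  define g where "g y = \<i> * Fz \<Phi> z (Complex x y)" for y
  have measg: "g \<in> borel_measurable lborel" unfolding g_def using int by auto
  have lim: "((\<lambda>T. LINT y|lborel. indicator {-T..T} y *\<^sub>R g y) \<longlongrightarrow> (LINT y|lborel. g y)) at_top"
  proof (rule integral_dominated_convergence_at_top[where w="\<lambda>y. norm (g y)"])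
    show "g \<in> borel_measurable lborel" by (rule measg)
    show "(\<lambda>y. indicator {-T..T} y *\<^sub>R g y) \<in> borel_measurable lborel" for T
      using measg by measurable
    show "integrable lborel (\<lambda>y. norm (g y))" using int unfolding g_def by (rule integrable_norm)
    show "AE y in lborel. ((\<lambda>T. indicator {-T..T} y *\<^sub>R g y) \<longlongrightarrow> g y) at_top"
    proof (rule AE_I2)
      fix y
      have "eventually (\<lambda>T. g y = indicator {-T..T} y *\<^sub>R g y) at_top"
        using eventually_ge_at_top[of "\<bar>y\<bar>"] by eventually_elim (auto simp: indicator_def)
      thus "((\<lambda>T. indicator {-T..T} y *\<^sub>R g y) \<longlongrightarrow> g y) at_top"
        by (rule Lim_transform_eventually[OF tendsto_const])
    qed
    show "\<forall>\<^sub>F T in at_top. AE y in lborel. norm (indicator {-T..T} y *\<^sub>R g y) \<le> norm (g y)"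
      by (intro always_eventually allI AE_I2) (auto simp: indicator_def)
  qed
  show "((\<lambda>T. contour_integral (linepath (Complex x (-T)) (Complex x T)) (Fz \<Phi> z))
           \<longlongrightarrow> (LINT y|lborel. \<i> * Fz \<Phi> z (Complex x y))) at_top"
  proof (rule Lim_transform_eventually[OF lim[unfolded g_def]])
    show "\<forall>\<^sub>F T in at_top. (LINT y|lborel. indicator {-T..T} y *\<^sub>R (\<i> * Fz \<Phi> z (Complex x y))) =
          contour_integral (linepath (Complex x (-T)) (Complex x T)) (Fz \<Phi> z)"
      using eventually_gt_at_top[of 0]
    proof eventually_elim
      case (elim T)
      have si: "set_integrable lborel {-T..T} (\<lambda>y. Fz \<Phi> z (Complex x y))"
        unfolding set_integrable_def by (rule integrable_mult_indicator[OF _ intF]) simp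
      have "contour_integral (linepath (Complex x (-T)) (Complex x T)) (Fz \<Phi> z)
            = \<i> * integral {-T..T} (\<lambda>y. Fz \<Phi> z (Complex x y))"
        by (rule contour_integral_linepath_same_Re) (use elim in auto)
      also have "integral {-T..T} (\<lambda>y. Fz \<Phi> z (Complex x y)) = (LINT y:{-T..T}|lborel. Fz \<Phi> z (Complex x y))"
        by (rule set_borel_integral_eq_integral(2)[OF si, symmetric])
      also have "\<i> * \<dots> = (LINT y:{-T..T}|lborel. \<i> * Fz \<Phi> z (Complex x y))"
        by (rule set_integral_mult_right[symmetric])
      finally show ?case unfolding set_lebesgue_integral_def by (rule sym)
    qed
  qed
qed

end



context phi_setup begin

lemma gt_cont: "0 < a \<Longrightarrow> continuous_on {a..b} (\<lambda>x. cmod (\<Phi> (Complex x t) / Complex x t))"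
  by (intro continuous_intros Phi_hline_cont Complex_cont_x) (auto simp: complex_eq_iff)

lemma cond_a_real:
  assumes "0 < a" "a < b"
  shows "((\<lambda>t. exp (- pi * \<bar>t\<bar>) * integral {a..b} (\<lambda>x. cmod (\<Phi> (Complex x t) / Complex x t))) \<longlongrightarrow> 0) at_top"
    "((\<lambda>t. exp (- pi * \<bar>t\<bar>) * integral {a..b} (\<lambda>x. cmod (\<Phi> (Complex x t) / Complex x t))) \<longlongrightarrow> 0) at_bot"
proof -
  have eq: "ennreal (exp (- pi * \<bar>t\<bar>)) *
            (\<integral>\<^sup>+ x\<in>{a..b}. ennreal (cmod (\<Phi> (Complex x t) / Complex x t)) \<partial>lborel)
          = ennreal (exp (- pi * \<bar>t\<bar>) * integral {a..b} (\<lambda>x. cmod (\<Phi> (Complex x t) / Complex x t)))" for t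
  proof -
    have int: "(\<lambda>x. cmod (\<Phi> (Complex x t) / Complex x t)) integrable_on {a..b}"
      by (rule integrable_continuous_interval[OF gt_cont[OF assms(1)]])
    have "(\<integral>\<^sup>+ x\<in>{a..b}. ennreal (cmod (\<Phi> (Complex x t) / Complex x t)) \<partial>lborel)
          = ennreal (integral {a..b} (\<lambda>x. cmod (\<Phi> (Complex x t) / Complex x t)))"
      by (rule nn_integral_has_integral_lebesgue'[OF _ integrable_integral[OF int]]) simp
    moreover have "0 \<le> integral {a..b} (\<lambda>x. cmod (\<Phi> (Complex x t) / Complex x t))"
      by (rule integral_nonneg[OF int]) simp
    ultimately show ?thesis by (simp add: ennreal_mult)
  qed
  have nn: "\<forall>\<^sub>F t in F. 0 \<le> exp (- pi * \<bar>t\<bar>) * integral {a..b} (\<lambda>x. cmod (\<Phi> (Complex x t) / Complex x t))" for F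
  proof (intro always_eventually allI mult_nonneg_nonneg)
    fix t
    show "0 \<le> integral {a..b} (\<lambda>x. cmod (\<Phi> (Complex x t) / Complex x t))"
      by (rule integral_nonneg[OF integrable_continuous_interval[OF gt_cont[OF assms(1)]]]) simp
  qed simp
  have eq': "(\<lambda>t. ennreal (exp (- pi * \<bar>t\<bar>)) *
            (\<integral>\<^sup>+ x\<in>{a..b}. ennreal (cmod (\<Phi> (Complex x t) / Complex x t)) \<partial>lborel))
          = (\<lambda>t. ennreal (exp (- pi * \<bar>t\<bar>) * integral {a..b} (\<lambda>x. cmod (\<Phi> (Complex x t) / Complex x t))))"
    by (rule ext) (rule eq)
  have L: "((\<lambda>t. ennreal (exp (- pi * \<bar>t\<bar>) * integral {a..b} (\<lambda>x. cmod (\<Phi> (Complex x t) / Complex x t)))) \<longlongrightarrow> ennreal 0) at_top"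
       "((\<lambda>t. ennreal (exp (- pi * \<bar>t\<bar>) * integral {a..b} (\<lambda>x. cmod (\<Phi> (Complex x t) / Complex x t)))) \<longlongrightarrow> ennreal 0) at_bot"
    using cond_a[OF assms] unfolding eq' ennreal_0 by blast+
  show "((\<lambda>t. exp (- pi * \<bar>t\<bar>) * integral {a..b} (\<lambda>x. cmod (\<Phi> (Complex x t) / Complex x t))) \<longlongrightarrow> 0) at_top"
    by (rule tendsto_ennrealD[OF L(1) nn]) simp
  show "((\<lambda>t. exp (- pi * \<bar>t\<bar>) * integral {a..b} (\<lambda>x. cmod (\<Phi> (Complex x t) / Complex x t))) \<longlongrightarrow> 0) at_bot"
    by (rule tendsto_ennrealD[OF L(2) nn]) simp
qed

lemma cond_c_real: "((\<lambda>x. LINT y|lborel. hl x y) \<longlongrightarrow> 0) at_top"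
proof (rule tendsto_ennrealD)
  have "((\<lambda>x. \<integral>\<^sup>+y. ennreal (hl x y) \<partial>lborel) \<longlongrightarrow> 0) at_top"
    using cond_c by (simp add: hl_def)
  moreover have "\<forall>\<^sub>F x in at_top. (\<integral>\<^sup>+y. ennreal (hl x y) \<partial>lborel) = ennreal (LINT y|lborel. hl x y)"
    using eventually_gt_at_top[of 0] by eventually_elim (rule hl_int(2))
  ultimately show "((\<lambda>x. ennreal (LINT y|lborel. hl x y)) \<longlongrightarrow> ennreal 0) at_top"
    by (simp add: Lim_transform_eventually)
  show "\<forall>\<^sub>F x in at_top. 0 \<le> (LINT y|lborel. hl x y)"
    by (intro always_eventually allI integral_nonneg_AE) (simp add: hl_nonneg)
qed simp

lemma horiz:
  assumes ab: "0 < a" "a < b" and t: "\<bar>t\<bar> \<ge> 1" and d: "\<delta> > 0"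
    "\<And>x. x \<in> {a..b} \<Longrightarrow> \<delta> \<le> norm (z - Complex x t)"
    "\<And>x. x \<in> {a..b} \<Longrightarrow> \<delta> \<le> norm (z + Complex x t)"
  shows "norm (contour_integral (linepath (Complex a t) (Complex b t)) (Fz \<Phi> z))
     \<le> 4 * norm (cos (of_real pi * z)) * (8 + 8 * norm z ^ 2 / \<delta>^2) *
        (exp (- pi * \<bar>t\<bar>) * integral {a..b} (\<lambda>x. cmod (\<Phi> (Complex x t) / Complex x t)))"
proof -
  define K where "K = 4 * norm (cos (of_real pi * z)) * (8 + 8 * norm z ^ 2 / \<delta>^2)"
  have nz: "cos (of_real pi * Complex x t) \<noteq> 0" for x
  proof -
    have "0 < 1/4 * exp (pi * \<bar>t\<bar>)" by simp
    also have "\<dots> \<le> norm (cos (of_real pi * Complex x t))" by (rule norm_cos_pi_ge2[OF t])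
    finally show ?thesis by auto
  qed
  have nz2: "z^2 - (Complex x t)^2 \<noteq> 0" if "x \<in> {a..b}" for x
  proof -
    have a: "\<delta> \<le> norm (z - Complex x t)" "\<delta> \<le> norm (z + Complex x t)" using d that by auto
    have "z - Complex x t \<noteq> 0" "z + Complex x t \<noteq> 0" using a d(1) by auto
    moreover have "z^2 - (Complex x t)^2 = (z - Complex x t) * (z + Complex x t)"
      by (simp add: algebra_simps power2_eq_square)
    ultimately show ?thesis by simp
  qed
  have cont: "continuous_on {a..b} (\<lambda>x. Fz \<Phi> z (Complex x t))"
    unfolding Fz_def
    by (intro continuous_intros Phi_hline_cont Complex_cont_x) (use nz nz2 ab in auto)
  have bnd: "norm (Fz \<Phi> z (Complex x t)) \<le> K * (exp (- pi * \<bar>t\<bar>) * cmod (\<Phi> (Complex x t) / Complex x t))"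
    if "x \<in> {a..b}" for x
  proof -
    have "norm (Fz \<Phi> z (Complex x t)) \<le> norm (cos (of_real pi * z)) / (1/4) * (8 + 8 * norm z ^ 2 / \<delta>^2)
            * (norm (\<Phi> (Complex x t) / Complex x t) * exp (- pi * \<bar>Im (Complex x t)\<bar>))"
      by (rule Fz_bound) (use that ab d norm_cos_pi_ge2[OF t, of x] in \<open>auto simp: complex_eq_iff\<close>)
    thus ?thesis by (simp add: K_def mult_ac)
  qed
  have "contour_integral (linepath (Complex a t) (Complex b t)) (Fz \<Phi> z) = integral {a..b} (\<lambda>x. Fz \<Phi> z (Complex x t))"
    by (rule contour_integral_linepath_same_Im[OF ab(2)])
  also have "norm \<dots> \<le> integral {a..b} (\<lambda>x. K * (exp (- pi * \<bar>t\<bar>) * cmod (\<Phi> (Complex x t) / Complex x t)))"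
    by (rule Henstock_Kurzweil_Integration.integral_norm_bound_integral[OF integrable_continuous_interval[OF cont]
          integrable_continuous_interval bnd]) (intro continuous_intros gt_cont ab)
  also have "\<dots> = K * (exp (- pi * \<bar>t\<bar>) * integral {a..b} (\<lambda>x. cmod (\<Phi> (Complex x t) / Complex x t)))"
    by simp
  finally show ?thesis by (simp add: K_def)
qed

end



definition Cn :: "nat \<Rightarrow> complex" where "Cn n = of_nat n - 1/2"

lemma pi_Cn: "of_real pi * Cn n = of_real (pi * (real n - 1/2))"
  by (simp add: Cn_def algebra_simps)

lemma cos_Cn: "cos (of_real pi * Cn n) = 0"
proof -
  have "cos (pi * (real n - 1/2)) = cos (real n * pi - pi/2)" by (simp add: algebra_simps)
  also have "\<dots> = 0" by (simp add: cos_diff)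
  finally have r: "cos (pi * (real n - 1/2)) = 0" .
  have "cos (of_real pi * Cn n) = of_real (cos (pi * (real n - 1/2)))" by (simp only: pi_Cn cos_of_real)
  thus ?thesis using r by simp
qed

lemma sin_Cn: "sin (of_real pi * Cn n) = - ((-1)^n)"
proof -
  have "sin (pi * (real n - 1/2)) = sin (real n * pi - pi/2)" by (simp add: algebra_simps)
  also have "\<dots> = - ((-1)^n)" by (simp add: sin_diff)
  finally have r: "sin (pi * (real n - 1/2)) = - ((-1)^n)" .
  have "sin (of_real pi * Cn n) = of_real (sin (pi * (real n - 1/2)))" by (simp only: pi_Cn sin_of_real)
  thus ?thesis using r by simp
qed

lemma Re_Cn: "Re (Cn n) = real n - 1/2" and Im_Cn: "Im (Cn n) = 0"
  by (simp_all add: Cn_def)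

lemma inj_Cn: "inj Cn"
  by (auto simp: inj_def Cn_def)

lemma cos_zero_Cn:
  assumes "Re w > 0" "cos (of_real pi * w) = 0"
  shows "\<exists>n\<ge>1. w = Cn n"
proof -
  obtain k :: int where k: "of_real pi * w = complex_of_real (k * pi) + of_real pi / 2"
    using assms(2) cos_eq_0 by blast
  hence "of_real pi * w = of_real pi * (of_int k + 1/2)" by (simp add: algebra_simps)
  hence w: "w = of_int k + 1/2" by simp
  have "k \<ge> 0" using assms(1) w by simp
  then obtain m where m: "k = int m" using nonneg_eq_int by blast
  show ?thesis
    by (rule exI[of _ "Suc m"]) (simp add: w m Cn_def)
qed

lemma res_Cn:
  fixes \<Phi> :: "complex \<Rightarrow> complex"
  assumes s: "open s" "c \<in> s" and holo: "Fz \<Phi> z holomorphic_on s - {c}"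
    and Pc: "isCont \<Phi> c" and cc: "cos (of_real pi * c) = 0" and sc: "sin (of_real pi * c) \<noteq> 0"
    and zc: "z^2 - c^2 \<noteq> 0"
  shows "residue (Fz \<Phi> z) c = cos (of_real pi * z) * (2 * c / (z^2 - c^2)) * \<Phi> c *
            inverse (- sin (of_real pi * c) * of_real pi)"
proof (rule residue_simple'[OF s holo])
  define h where "h w = cos (of_real pi * z) * (2 * w / (z^2 - w^2)) * \<Phi> w" for w
  define D where "D = - sin (of_real pi * c) * of_real pi"
  have D: "D \<noteq> 0" using sc by (simp add: D_def)
  have hl: "(h \<longlongrightarrow> h c) (at c)"
    unfolding h_def using Pc zc by (intro tendsto_intros) (auto simp: isCont_def)
  have der: "((\<lambda>w. cos (of_real pi * w)) has_field_derivative D) (at c)"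
    unfolding D_def by (auto intro!: derivative_eq_intros)
  have "((\<lambda>w. (cos (of_real pi * w) - cos (of_real pi * c)) / (w - c)) \<longlongrightarrow> D) (at c)"
    using der by (simp add: has_field_derivative_iff)
  hence "((\<lambda>w. cos (of_real pi * w) / (w - c)) \<longlongrightarrow> D) (at c)" using cc by simp
  hence inv: "((\<lambda>w. inverse (cos (of_real pi * w) / (w - c))) \<longlongrightarrow> inverse D) (at c)"
    using D by (rule tendsto_inverse)
  have "((\<lambda>w. h w * inverse (cos (of_real pi * w) / (w - c))) \<longlongrightarrow> h c * inverse D) (at c)"
    by (rule tendsto_mult[OF hl inv])
  moreover have "(\<lambda>w. h w * inverse (cos (of_real pi * w) / (w - c))) = (\<lambda>w. Fz \<Phi> z w * (w - c))"
    by (rule ext) (simp add: h_def Fz_def divide_inverse mult_ac)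
  ultimately show "((\<lambda>w. Fz \<Phi> z w * (w - c)) \<longlongrightarrow> cos (of_real pi * z) * (2 * c / (z^2 - c^2)) * \<Phi> c *
            inverse (- sin (of_real pi * c) * of_real pi)) (at c)"
    by (simp add: h_def D_def)
qed

lemma res_z:
  fixes \<Phi> :: "complex \<Rightarrow> complex"
  assumes s: "open s" "z \<in> s" and holo: "Fz \<Phi> z holomorphic_on s - {z}"
    and Pz: "isCont \<Phi> z" and cz: "cos (of_real pi * z) \<noteq> 0" and z0: "z \<noteq> 0"
  shows "residue (Fz \<Phi> z) z = - \<Phi> z"
proof (rule residue_simple'[OF s holo])
  define g where "g w = - (cos (of_real pi * z) / cos (of_real pi * w) * (2 * w / (z + w)) * \<Phi> w)" for w
  have zz: "z + z \<noteq> 0" using z0 by (simp add: complex_eq_iff)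
  have gl: "(g \<longlongrightarrow> g z) (at z)"
    unfolding g_def using Pz cz zz by (intro tendsto_intros) (auto simp: isCont_def)
  have gz: "g z = - \<Phi> z" using cz zz by (simp add: g_def field_simps)
  have ev: "\<forall>\<^sub>F w in at z. g w = Fz \<Phi> z w * (w - z)"
    unfolding eventually_at_filter
  proof (intro always_eventually allI impI)
    fix w assume "w \<noteq> z"
    hence wz: "w - z \<noteq> 0" "z - w \<noteq> 0" by auto
    have fac: "z^2 - w^2 = (z - w) * (z + w)" by (simp add: algebra_simps power2_eq_square)
    have key: "(2 * w / (z^2 - w^2)) * (w - z) = - (2 * w / (z + w))"
    proof (cases "z + w = 0")
      case True thus ?thesis by (simp add: fac)
    next
      case False
      have "(2 * w / (z^2 - w^2)) * (w - z) = (2*w*(w-z)) / ((z-w)*(z+w))" by (simp add: fac)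
      also have "\<dots> = (-(2*w) * (z-w)) / ((z+w)*(z-w))" by (simp add: algebra_simps)
      also have "\<dots> = -(2*w)/(z+w)" by (rule nonzero_mult_divide_mult_cancel_right[OF wz(2)])
      finally show ?thesis by simp
    qed
    have "Fz \<Phi> z w * (w - z) = cos (of_real pi * z) / cos (of_real pi * w) * \<Phi> w * ((2 * w / (z^2 - w^2)) * (w - z))"
      by (simp add: Fz_def mult_ac)
    also have "\<dots> = g w" unfolding key g_def by (simp add: mult_ac)
    finally show "g w = Fz \<Phi> z w * (w - z)" by simp
  qed
  show "((\<lambda>w. Fz \<Phi> z w * (w - z)) \<longlongrightarrow> - \<Phi> z) (at z)"
    using Lim_transform_eventually[OF gl ev] gz by simp
qed




lemma half_ne: "real n - 1/2 \<noteq> real m"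
proof
  assume "real n - 1/2 = real m"
  hence "real (2 * n) = real (2 * m + 1)" by simp
  hence "2 * n = 2 * m + 1" by (simp only: of_nat_eq_iff)
  thus False by presburger
qed

lemma rect_split:
  assumes "continuous_on (path_image (rectpath a1 a3)) f"
  shows "contour_integral (rectpath a1 a3) f =
     contour_integral (linepath a1 (Complex (Re a3) (Im a1))) f +
     contour_integral (linepath (Complex (Re a3) (Im a1)) a3) f -
     contour_integral (linepath (Complex (Re a1) (Im a3)) a3) f -
     contour_integral (linepath a1 (Complex (Re a1) (Im a3))) f"
proof -
  define a2 where "a2 = Complex (Re a3) (Im a1)"
  define a4 where "a4 = Complex (Re a1) (Im a3)"
  have pi: "path_image (rectpath a1 a3) = closed_segment a1 a2 \<union> closed_segment a2 a3 \<union> closed_segment a3 a4 \<union> closed_segment a4 a1"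
    by (simp add: rectpath_def Let_def path_image_join a2_def a4_def Un_assoc)
  have i1: "f contour_integrable_on linepath a1 a2"
    by (rule contour_integrable_continuous_linepath, rule continuous_on_subset[OF assms]) (auto simp: pi)
  have i2: "f contour_integrable_on linepath a2 a3"
    by (rule contour_integrable_continuous_linepath, rule continuous_on_subset[OF assms]) (auto simp: pi)
  have i3: "f contour_integrable_on linepath a3 a4"
    by (rule contour_integrable_continuous_linepath, rule continuous_on_subset[OF assms]) (auto simp: pi)
  have i4: "f contour_integrable_on linepath a4 a1"
    by (rule contour_integrable_continuous_linepath, rule continuous_on_subset[OF assms]) (auto simp: pi)
  have "contour_integral (rectpath a1 a3) f = contour_integral (linepath a1 a2 +++ linepath a2 a3 +++ linepath a3 a4 +++ linepath a4 a1) f"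
    by (simp add: rectpath_def Let_def a2_def a4_def)
  also have "\<dots> = contour_integral (linepath a1 a2) f + contour_integral (linepath a2 a3) f +
                   contour_integral (linepath a3 a4) f + contour_integral (linepath a4 a1) f"
    using i1 i2 i3 i4 by (simp add: contour_integrable_joinI)
  also have "contour_integral (linepath a3 a4) f = - contour_integral (linepath a4 a3) f"
    by (rule contour_integral_reverse_linepath, rule continuous_on_subset[OF assms]) (auto simp: pi)
  also have "contour_integral (linepath a4 a1) f = - contour_integral (linepath a1 a4) f"
    by (rule contour_integral_reverse_linepath, rule continuous_on_subset[OF assms]) (auto simp: pi)
  finally show ?thesis by (simp add: a2_def a4_def)
qed

context phi_setup begin

lemma Phi_isCont: "Re w > 0 \<Longrightarrow> isCont \<Phi> w"
  using Phi_cont by (subst (asm) continuous_on_eq_continuous_at) (auto simp: open_halfspace_Re_gt)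

definition resC :: "complex \<Rightarrow> nat \<Rightarrow> complex" where
  "resC z n = cos (of_real pi * z) * (2 * Cn n / (z^2 - (Cn n)^2)) * \<Phi> (Cn n) *
            inverse (- sin (of_real pi * Cn n) * of_real pi)"

lemma rect:
  fixes z :: complex and N :: nat and T :: real
  assumes N: "N \<ge> 1" and T: "\<bar>Im z\<bar> < T" and zb: "Re z \<noteq> \<beta>" "-\<beta> < Re z" "Re z < real N"
    and cz: "cos (of_real pi * z) \<noteq> 0"
  shows "contour_integral (rectpath (Complex \<beta> (-T)) (Complex (real N) T)) (Fz \<Phi> z)
     = 2 * of_real pi * \<i> * ((\<Sum>n\<in>{1..N}. resC z n) + (if \<beta> < Re z then - \<Phi> z else 0))"
    and "continuous_on (path_image (rectpath (Complex \<beta> (-T)) (Complex (real N) T))) (Fz \<Phi> z)"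
proof -
  note b = beta
  define a0 where "a0 = (if \<beta> < Re z then 0 else \<bar>Re z\<bar>)"
  have a0: "0 \<le> a0" "a0 < \<beta>" using zb b by (auto simp: a0_def)
  define S where "S = {w. a0 < Re w} \<inter> {w. Re w < real N + 1/4}"
  define Z where "Z = (if \<beta> < Re z then {z} else {})"
  define pts where "pts = Cn ` {1..N} \<union> Z"
  define a1 where "a1 = Complex \<beta> (-T)"
  define a3 where "a3 = Complex (real N) T"
  have T0: "T > 0" using T by linarith
  have SRe: "Re w > 0" if "w \<in> S" for w using that a0 by (auto simp: S_def)
  have oS: "open S" unfolding S_def by (intro open_Int open_halfspace_Re_gt open_halfspace_Re_lt)
  have cS: "connected S" unfolding S_def
    by (intro convex_connected convex_Int convex_halfspace_Re_gt convex_halfspace_Re_lt)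
  have fpts: "finite pts" by (simp add: pts_def Z_def)
  have zC: "z \<noteq> Cn n" "z \<noteq> - Cn n" for n
    using cz cos_Cn[of n] by auto
  have zC2: "z^2 - (Cn n)^2 \<noteq> 0" for n
    using zC[of n] by (auto simp: power2_eq_iff)
  have cos_nz: "cos (of_real pi * w) \<noteq> 0" if wS: "w \<in> S - pts" for w
  proof
    assume "cos (of_real pi * w) = 0"
    then obtain n where n: "n \<ge> 1" "w = Cn n" using cos_zero_Cn[of w] SRe[of w] wS by blast
    have "real n - 1/2 < real N + 1/4" using wS n by (auto simp: S_def Re_Cn)
    hence "n \<le> N" by linarith
    thus False using wS n by (auto simp: pts_def)
  qed
  have zw_nz: "z^2 - w^2 \<noteq> 0" if wS: "w \<in> S - pts" for w
  proof
    assume "z^2 - w^2 = 0"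
    hence "w = z \<or> w = -z" by (auto simp: power2_eq_iff)
    thus False
    proof
      assume "w = z" thus False using wS by (auto simp: S_def pts_def Z_def a0_def split: if_splits)
    next
      assume "w = -z" thus False using wS zb b by (auto simp: S_def pts_def Z_def a0_def split: if_splits)
    qed
  qed
  have holoF: "Fz \<Phi> z holomorphic_on S - pts"
    unfolding Fz_def
    by (intro holomorphic_intros holomorphic_on_subset[OF holo]) (use SRe cos_nz zw_nz in auto)
  have le: "Re a1 \<le> Re a3" "Im a1 \<le> Im a3" using b N T0 by (auto simp: a1_def a3_def)
  have pimg: "path_image (rectpath a1 a3) \<subseteq> S - pts"
  proof
    fix w assume w: "w \<in> path_image (rectpath a1 a3)"
    have wR: "\<beta> \<le> Re w" "Re w \<le> real N" using w le by (auto simp: path_image_rectpath a1_def a3_def)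
    have "w \<in> S" using wR a0 by (auto simp: S_def)
    moreover have "w \<notin> Cn ` {1..N}"
    proof
      assume "w \<in> Cn ` {1..N}"
      then obtain n where n: "n \<in> {1..N}" "w = Cn n" by auto
      have "Re w \<in> {\<beta>, real N}" using w le T0 n by (auto simp: path_image_rectpath a1_def a3_def Im_Cn)
      moreover have "real n - 1/2 \<noteq> \<beta>" using n b by auto
      ultimately show False using n half_ne[of n N] by (auto simp: Re_Cn)
    qed
    moreover have "w \<notin> Z"
    proof
      assume "w \<in> Z"
      hence "w = z" "\<beta> < Re z" by (auto simp: Z_def split: if_splits)
      thus False using w le T zb by (auto simp: path_image_rectpath a1_def a3_def)
    qed
    ultimately show "w \<in> S - pts" by (auto simp: pts_def)
  qed
  have contP: "continuous_on (path_image (rectpath a1 a3)) (Fz \<Phi> z)"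
    by (rule continuous_on_subset[OF holomorphic_on_imp_continuous_on[OF holoF] pimg])
  thus "continuous_on (path_image (rectpath (Complex \<beta> (-T)) (Complex (real N) T))) (Fz \<Phi> z)"
    by (simp add: a1_def a3_def)
  have wout: "\<forall>w. w \<notin> S \<longrightarrow> winding_number (rectpath a1 a3) w = 0"
  proof (intro allI impI)
    fix w assume "w \<notin> S"
    hence "w \<notin> cbox a1 a3" using a0 by (auto simp: S_def in_cbox_complex_iff a1_def a3_def)
    thus "winding_number (rectpath a1 a3) w = 0" by (rule winding_number_rectpath_outside[OF le])
  qed
  have RT: "contour_integral (rectpath a1 a3) (Fz \<Phi> z) =
      2 * pi * \<i> * (\<Sum>p\<in>pts. winding_number (rectpath a1 a3) p * residue (Fz \<Phi> z) p)"
    by (rule Residue_theorem[OF oS cS fpts holoF]) (use pimg wout in auto)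
  have disj: "Cn ` {1..N} \<inter> Z = {}" using zC by (auto simp: Z_def)
  have sumC: "(\<Sum>p\<in>Cn ` {1..N}. winding_number (rectpath a1 a3) p * residue (Fz \<Phi> z) p) = (\<Sum>n\<in>{1..N}. resC z n)"
  proof -
    have "(\<Sum>p\<in>Cn ` {1..N}. winding_number (rectpath a1 a3) p * residue (Fz \<Phi> z) p)
        = (\<Sum>n\<in>{1..N}. winding_number (rectpath a1 a3) (Cn n) * residue (Fz \<Phi> z) (Cn n))"
      by (rule sum.reindex[unfolded comp_def]) (rule inj_on_subset[OF inj_Cn], simp)
    also have "\<dots> = (\<Sum>n\<in>{1..N}. resC z n)"
    proof (rule sum.cong[OF refl])
      fix n assume n: "n \<in> {1..N}"
      have cS: "Cn n \<in> S" using n a0 b by (auto simp: S_def Re_Cn)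
      have inb: "Cn n \<in> box a1 a3" using n b T0 by (auto simp: in_box_complex_iff a1_def a3_def Re_Cn Im_Cn)
      have cp: "Cn n \<in> pts" using n by (auto simp: pts_def)
      have "residue (Fz \<Phi> z) (Cn n) = resC z n"
        unfolding resC_def
      proof (rule res_Cn)
        show "open (S - (pts - {Cn n}))" using oS fpts by (intro open_Diff finite_imp_closed) auto
        show "Cn n \<in> S - (pts - {Cn n})" using cS by auto
        have "S - (pts - {Cn n}) - {Cn n} = S - pts" using cp by auto
        thus "Fz \<Phi> z holomorphic_on S - (pts - {Cn n}) - {Cn n}" using holoF by simp
        show "isCont \<Phi> (Cn n)" using SRe[OF cS] by (rule Phi_isCont)
        show "cos (of_real pi * Cn n) = 0" by (rule cos_Cn)
        show "sin (of_real pi * Cn n) \<noteq> 0" by (simp add: sin_Cn)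
        show "z^2 - (Cn n)^2 \<noteq> 0" by (rule zC2)
      qed
      thus "winding_number (rectpath a1 a3) (Cn n) * residue (Fz \<Phi> z) (Cn n) = resC z n"
        using winding_number_rectpath[OF inb] by simp
    qed
    finally show ?thesis .
  qed
  have sumZ: "(\<Sum>p\<in>Z. winding_number (rectpath a1 a3) p * residue (Fz \<Phi> z) p) = (if \<beta> < Re z then - \<Phi> z else 0)"
  proof (cases "\<beta> < Re z")
    case True
    have zS: "z \<in> S" using True a0 zb by (auto simp: S_def)
    have inb: "z \<in> box a1 a3" using True zb T by (auto simp: in_box_complex_iff a1_def a3_def)
    have zp: "z \<in> pts" using True by (auto simp: pts_def Z_def)
    have "residue (Fz \<Phi> z) z = - \<Phi> z"
    proof (rule res_z)
      show "open (S - (pts - {z}))" using oS fpts by (intro open_Diff finite_imp_closed) auto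
      show "z \<in> S - (pts - {z})" using zS by auto
      have "S - (pts - {z}) - {z} = S - pts" using zp by auto
      thus "Fz \<Phi> z holomorphic_on S - (pts - {z}) - {z}" using holoF by simp
      show "isCont \<Phi> z" using SRe[OF zS] by (rule Phi_isCont)
      show "cos (of_real pi * z) \<noteq> 0" by (rule cz)
      show "z \<noteq> 0" using SRe[OF zS] by auto
    qed
    thus ?thesis using True winding_number_rectpath[OF inb] by (simp add: Z_def)
  qed (simp add: Z_def)
  have "contour_integral (rectpath a1 a3) (Fz \<Phi> z) = 2 * pi * \<i> * ((\<Sum>n\<in>{1..N}. resC z n) + (if \<beta> < Re z then - \<Phi> z else 0))"
    unfolding RT pts_def
    by (subst sum.union_disjoint) (use disj sumC sumZ in \<open>auto simp: Z_def\<close>)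
  thus "contour_integral (rectpath (Complex \<beta> (-T)) (Complex (real N) T)) (Fz \<Phi> z)
     = 2 * of_real pi * \<i> * ((\<Sum>n\<in>{1..N}. resC z n) + (if \<beta> < Re z then - \<Phi> z else 0))"
    by (simp add: a1_def a3_def)
qed

end



context phi_setup begin

definition V :: "complex \<Rightarrow> real \<Rightarrow> complex" where
  "V z x = (LINT y|lborel. \<i> * Fz \<Phi> z (Complex x y))"

lemma cos_pi_nat: "cos (pi * real N) = (-1)^N"
  by (simp add: mult.commute)

lemma fixedN:
  fixes z :: complex and N :: nat
  assumes zb: "Re z \<noteq> \<beta>" "-\<beta> < Re z" and cz: "cos (of_real pi * z) \<noteq> 0"
    and N: "N \<ge> 1" "Re z + 1 \<le> real N"
  shows "V z (real N) - V z \<beta> = 2 * of_real pi * \<i> * ((\<Sum>n\<in>{1..N}. resC z n) + (if \<beta> < Re z then - \<Phi> z else 0))"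
proof -
  note b = beta
  define c where "c = 2 * of_real pi * \<i> * ((\<Sum>n\<in>{1..N}. resC z n) + (if \<beta> < Re z then - \<Phi> z else 0))"
  define db where "db = min \<bar>Re z - \<beta>\<bar> (Re z + \<beta>)"
  have db: "db > 0" using zb by (auto simp: db_def)
  have cb: "cos (pi * \<beta>) \<noteq> 0"
  proof -
    have p1: "0 < pi * \<beta>" using b by simp
    have p2: "pi * \<beta> < pi * (1/2)" using b by (intro mult_strict_left_mono) auto
    have p3: "-(pi/2) < pi * \<beta>" using p1 pi_gt_zero by argo
    have p4: "pi * \<beta> < pi/2" using p2 by simp
    have "0 < cos (pi * \<beta>)" by (rule cos_gt_zero_pi[OF p3 p4])
    thus ?thesis by simp
  qed
  have db1: "db \<le> norm (z - Complex \<beta> y)" for y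
    using abs_Re_le_cmod[of "z - Complex \<beta> y"] by (simp add: db_def)
  have db2: "db \<le> norm (z + Complex \<beta> y)" for y
    using abs_Re_le_cmod[of "z + Complex \<beta> y"] zb b by (simp add: db_def)
  have dN1: "1/2 \<le> norm (z - Complex (real N) y)" for y
    using abs_Re_le_cmod[of "z - Complex (real N) y"] N by simp
  have N1: "real N \<ge> 1" using N by simp
  have dN2: "1/2 \<le> norm (z + Complex (real N) y)" for y
  proof -
    have r: "\<bar>Re z + real N\<bar> \<le> norm (z + Complex (real N) y)"
      using abs_Re_le_cmod[of "z + Complex (real N) y"] by simp
    have "1/2 < Re z + real N" using N1 zb(2) b(2) by argo
    thus ?thesis using r by argo
  qed
  have cN: "cos (pi * real N) \<noteq> 0" by (simp add: cos_pi_nat)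
  have Nb: "\<beta> < real N" using N b by simp
  note vb = vert[OF b(1) db db1 db2 cb]
  note vN = vert[of "real N" "1/2" z, OF _ _ dN1 dN2 cN]
  define Kh where "Kh = 4 * norm (cos (of_real pi * z)) * (8 + 8 * norm z ^ 2 / 1^2)"
  have hb: "norm (contour_integral (linepath (Complex \<beta> t) (Complex (real N) t)) (Fz \<Phi> z))
     \<le> Kh * (exp (- pi * \<bar>t\<bar>) * integral {\<beta>..real N} (\<lambda>x. cmod (\<Phi> (Complex x t) / Complex x t)))"
    if t: "\<bar>t\<bar> \<ge> \<bar>Im z\<bar> + 1" for t
  proof -
    have d: "1 \<le> norm (z - Complex x t)" "1 \<le> norm (z + Complex x t)" for x
      using abs_Im_le_cmod[of "z - Complex x t"] abs_Im_le_cmod[of "z + Complex x t"] t by auto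
    show ?thesis unfolding Kh_def
      by (rule horiz) (use b Nb t d in auto)
  qed
  have H1: "((\<lambda>T. contour_integral (linepath (Complex \<beta> T) (Complex (real N) T)) (Fz \<Phi> z)) \<longlongrightarrow> 0) at_top"
  proof (rule Lim_null_comparison)
    show "\<forall>\<^sub>F T in at_top. norm (contour_integral (linepath (Complex \<beta> T) (Complex (real N) T)) (Fz \<Phi> z))
       \<le> Kh * (exp (- pi * \<bar>T\<bar>) * integral {\<beta>..real N} (\<lambda>x. cmod (\<Phi> (Complex x T) / Complex x T)))"
      using eventually_ge_at_top[of "\<bar>Im z\<bar> + 1"] by eventually_elim (rule hb, auto)
    show "((\<lambda>T. Kh * (exp (- pi * \<bar>T\<bar>) * integral {\<beta>..real N} (\<lambda>x. cmod (\<Phi> (Complex x T) / Complex x T)))) \<longlongrightarrow> 0) at_top"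
      by (rule tendsto_mult_right_zero[OF cond_a_real(1)[OF b(1) Nb]])
  qed
  have H2: "((\<lambda>T. contour_integral (linepath (Complex \<beta> (-T)) (Complex (real N) (-T))) (Fz \<Phi> z)) \<longlongrightarrow> 0) at_top"
  proof (rule Lim_null_comparison)
    show "\<forall>\<^sub>F T in at_top. norm (contour_integral (linepath (Complex \<beta> (-T)) (Complex (real N) (-T))) (Fz \<Phi> z))
       \<le> Kh * (exp (- pi * \<bar>-T\<bar>) * integral {\<beta>..real N} (\<lambda>x. cmod (\<Phi> (Complex x (-T)) / Complex x (-T))))"
      using eventually_ge_at_top[of "\<bar>Im z\<bar> + 1"] by eventually_elim (rule hb, auto)
    show "((\<lambda>T. Kh * (exp (- pi * \<bar>-T\<bar>) * integral {\<beta>..real N} (\<lambda>x. cmod (\<Phi> (Complex x (-T)) / Complex x (-T))))) \<longlongrightarrow> 0) at_top"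
      by (rule tendsto_mult_right_zero[OF filterlim_compose[OF cond_a_real(2)[OF b(1) Nb] filterlim_uminus_at_bot_at_top]])
  qed
  have lim: "((\<lambda>T. contour_integral (linepath (Complex \<beta> (-T)) (Complex (real N) (-T))) (Fz \<Phi> z)
       + contour_integral (linepath (Complex (real N) (-T)) (Complex (real N) T)) (Fz \<Phi> z)
       - contour_integral (linepath (Complex \<beta> T) (Complex (real N) T)) (Fz \<Phi> z)
       - contour_integral (linepath (Complex \<beta> (-T)) (Complex \<beta> T)) (Fz \<Phi> z))
      \<longlongrightarrow> 0 + V z (real N) - 0 - V z \<beta>) at_top"
    unfolding V_def by (intro tendsto_intros H1 H2 vN(3) vb(3)) (use N in auto)
  have ev: "\<forall>\<^sub>F T in at_top. contour_integral (linepath (Complex \<beta> (-T)) (Complex (real N) (-T))) (Fz \<Phi> z)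
       + contour_integral (linepath (Complex (real N) (-T)) (Complex (real N) T)) (Fz \<Phi> z)
       - contour_integral (linepath (Complex \<beta> T) (Complex (real N) T)) (Fz \<Phi> z)
       - contour_integral (linepath (Complex \<beta> (-T)) (Complex \<beta> T)) (Fz \<Phi> z) = c"
    using eventually_gt_at_top[of "\<bar>Im z\<bar>"]
  proof eventually_elim
    case (elim T)
    have zN: "Re z < real N" using N by simp
    note R = rect[OF N(1) elim zb zN cz]
    from rect_split[OF R(2)] R(1) show ?case by (simp add: c_def)
  qed
  have "((\<lambda>T::real. c) \<longlongrightarrow> 0 + V z (real N) - 0 - V z \<beta>) at_top"
    using lim ev by (rule Lim_transform_eventually)
  hence "c = 0 + V z (real N) - 0 - V z \<beta>"
    by (rule tendsto_unique[OF trivial_limit_at_top_linorder tendsto_const])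
  thus ?thesis by (simp add: c_def)
qed

end



lemma cos_nz_strip:
  assumes "\<bar>Re z\<bar> < 1/2" shows "cos (of_real pi * z) \<noteq> 0"
proof
  assume "cos (of_real pi * z) = 0"
  then obtain k :: int where k: "of_real pi * z = complex_of_real (k * pi) + of_real pi / 2"
    using cos_eq_0 by blast
  hence "of_real pi * z = of_real pi * (of_int k + 1/2)" by (simp add: algebra_simps)
  hence z: "z = of_int k + 1/2" by simp
  hence r: "Re z = real_of_int k + 1/2" by simp
  show False
  proof (cases "k \<ge> 0")
    case True
    hence "real_of_int k \<ge> 0" by simp
    thus False using r assms by argo
  next
    case False
    hence "real_of_int k \<le> -1" by simp
    thus False using r assms by argo
  qed
qed

lemma frac_id:
  fixes z c :: complex
  assumes "z - c \<noteq> 0" "z + c \<noteq> 0"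
  shows "1 / (z - c) - 1 / (z + c) = 2 * c / (z^2 - c^2)"
proof -
  have "z^2 - c^2 = (z - c) * (z + c)" by (simp add: algebra_simps power2_eq_square)
  thus ?thesis using assms by (simp add: field_simps)
qed

context phi_setup begin

lemma VN_bound:
  assumes zb: "-\<beta> < Re z" and N: "N \<ge> 1" "Re z + 1 \<le> real N"
  shows "norm (V z (real N)) \<le> norm (cos (of_real pi * z)) / (1/2) * (8 + 8 * norm z ^ 2 / (1/2)^2)
             * (LINT y|lborel. hl (real N) y)"
proof -
  note b = beta
  have dN1: "1/2 \<le> norm (z - Complex (real N) y)" for y
    using abs_Re_le_cmod[of "z - Complex (real N) y"] N by simp
  have N1: "real N \<ge> 1" using N by simp
  have dN2: "1/2 \<le> norm (z + Complex (real N) y)" for y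
  proof -
    have r: "\<bar>Re z + real N\<bar> \<le> norm (z + Complex (real N) y)"
      using abs_Re_le_cmod[of "z + Complex (real N) y"] by simp
    have "1/2 < Re z + real N" using N1 zb b(2) by argo
    thus ?thesis using r by argo
  qed
  have cN: "cos (pi * real N) \<noteq> 0" by (simp add: cos_pi_nat)
  have a: "\<bar>cos (pi * real N)\<bar> = 1" by (simp add: cos_pi_nat)
  from vert(2)[of "real N" "1/2" z, OF _ _ dN1 dN2 cN] N1 show ?thesis
    by (simp add: V_def a)
qed

lemma main_lim:
  assumes zb: "Re z \<noteq> \<beta>" "-\<beta> < Re z" and cz: "cos (of_real pi * z) \<noteq> 0"
  shows "(\<lambda>N. \<Sum>n\<in>{1..N}. resC z n) \<longlonglongrightarrow>
      (0 - V z \<beta>) / (2 * of_real pi * \<i>) - (if \<beta> < Re z then - \<Phi> z else 0)"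
proof -
  define e where "e = (if \<beta> < Re z then - \<Phi> z else 0)"
  define N0 where "N0 = nat \<lceil>Re z\<rceil> + 2"
  have N0: "N \<ge> 1" "Re z + 1 \<le> real N" if "N \<ge> N0" for N
  proof -
    show "N \<ge> 1" using that by (simp add: N0_def)
    have "Re z \<le> real (nat \<lceil>Re z\<rceil>)" by linarith
    moreover have "real (nat \<lceil>Re z\<rceil>) + 2 \<le> real N" using that by (simp add: N0_def)
    ultimately show "Re z + 1 \<le> real N" by argo
  qed
  have VN: "(\<lambda>N. V z (real N)) \<longlonglongrightarrow> 0"
  proof (rule Lim_null_comparison)
    show "\<forall>\<^sub>F N in sequentially. norm (V z (real N)) \<le> norm (cos (of_real pi * z)) / (1/2) * (8 + 8 * norm z ^ 2 / (1/2)^2)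
             * (LINT y|lborel. hl (real N) y)"
      using eventually_ge_at_top[of N0] by eventually_elim (rule VN_bound[OF zb(2) N0], auto)
    show "(\<lambda>N. norm (cos (of_real pi * z)) / (1/2) * (8 + 8 * norm z ^ 2 / (1/2)^2)
             * (LINT y|lborel. hl (real N) y)) \<longlonglongrightarrow> 0"
      by (rule tendsto_mult_right_zero[OF filterlim_compose[OF cond_c_real filterlim_real_sequentially]])
  qed
  have lim: "(\<lambda>N. (V z (real N) - V z \<beta>) / (2 * of_real pi * \<i>) - e) \<longlonglongrightarrow> (0 - V z \<beta>) / (2 * of_real pi * \<i>) - e"
    by (intro tendsto_intros VN) auto
  have ev: "\<forall>\<^sub>F N in sequentially. (V z (real N) - V z \<beta>) / (2 * of_real pi * \<i>) - e = (\<Sum>n\<in>{1..N}. resC z n)"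
    using eventually_ge_at_top[of N0]
  proof eventually_elim
    case (elim N)
    have "V z (real N) - V z \<beta> = 2 * of_real pi * \<i> * ((\<Sum>n\<in>{1..N}. resC z n) + e)"
      unfolding e_def by (rule fixedN[OF zb cz N0[OF elim]])
    thus ?case by simp
  qed
  show ?thesis using Lim_transform_eventually[OF lim ev] by (simp add: e_def)
qed

lemma summand_eq:
  assumes cz: "cos (of_real pi * z) \<noteq> 0"
  shows "1 / of_real pi * ((-1) ^ n * (\<Phi> (of_nat n - 1/2) * cos_div (of_nat n - 1/2) z
          - \<Phi> (of_nat n - 1/2) * cos_div (- (of_nat n - 1/2)) z)) = resC z n"
proof -
  define c where "c = Cn n"
  have c: "of_nat n - 1/2 = c" by (simp add: c_def Cn_def)
  have cc1: "cos (of_real pi * c) = 0" by (simp add: c_def cos_Cn)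
  have cc2: "cos (of_real pi * (-c)) = 0" using cc1 by simp
  have zc: "z - c \<noteq> 0" "z + c \<noteq> 0"
  proof
    assume "z - c = 0" hence "z = c" by simp
    thus False using cz cc1 by simp
  next
    show "z + c \<noteq> 0"
    proof
      assume "z + c = 0" hence "z = -c" by (simp add: add_eq_0_iff)
      thus False using cz cc2 by simp
    qed
  qed
  have zc': "z \<noteq> c" "z \<noteq> -c" using zc by (auto simp: add_eq_0_iff)
  have cd1: "cos_div c z = cos (of_real pi * z) / (z - c)" using zc' by (simp add: cos_div_def)
  have cd2: "cos_div (-c) z = cos (of_real pi * z) / (z + c)" using zc' by (simp add: cos_div_def)
  have s: "sin (of_real pi * c) = - ((-1)^n)" by (simp add: c_def sin_Cn)
  have "1 / of_real pi * ((-1) ^ n * (\<Phi> c * cos_div c z - \<Phi> c * cos_div (- c) z))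
      = 1 / of_real pi * (-1) ^ n * \<Phi> c * cos (of_real pi * z) * (1 / (z - c) - 1 / (z + c))"
    by (simp add: cd1 cd2 field_simps)
  also have "\<dots> = 1 / of_real pi * (-1) ^ n * \<Phi> c * cos (of_real pi * z) * (2 * c / (z^2 - c^2))"
    by (simp add: frac_id[OF zc])
  also have "\<dots> = resC z n"
  proof -
    have "inverse (- sin (of_real pi * c) * of_real pi) = (-1)^n / (of_real pi :: complex)"
      unfolding s by (cases "even n") (simp_all add: field_simps)
    thus ?thesis by (simp add: resC_def c_def[symmetric] mult_ac divide_inverse)
  qed
  finally show ?thesis unfolding c .
qed

lemma K_eq:
  assumes cz: "cos (of_real pi * z) \<noteq> 0"
  shows "K_fun \<Phi> z = lim (\<lambda>N. \<Sum>n\<in>{1..N}. resC z n)"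
proof -
  have "(\<lambda>N. (1 / of_real pi) *
      (\<Sum>n=1..N. (-1) ^ n *
         (\<Phi> (of_nat n - 1/2) * cos_div (of_nat n - 1/2) z
          - \<Phi> (of_nat n - 1/2) * cos_div (- (of_nat n - 1/2)) z))) = (\<lambda>N. \<Sum>n\<in>{1..N}. resC z n)"
    by (rule ext) (simp only: sum_distrib_left summand_eq[OF cz])
  thus ?thesis by (simp add: K_fun_def)
qed

lemma I_eq: "I_fun \<beta> \<Phi> z = V z \<beta> / (2 * of_real pi * \<i>)"
  by (simp add: I_fun_def V_def Fz_def Let_def)

lemma general:
  assumes zb: "Re z \<noteq> \<beta>" "-\<beta> < Re z" and cz: "cos (of_real pi * z) \<noteq> 0"
  shows "K_fun \<Phi> z = - I_fun \<beta> \<Phi> z - (if \<beta> < Re z then - \<Phi> z else 0)"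
proof -
  have "K_fun \<Phi> z = (0 - V z \<beta>) / (2 * of_real pi * \<i>) - (if \<beta> < Re z then - \<Phi> z else 0)"
    unfolding K_eq[OF cz] by (rule limI[OF main_lim[OF zb cz]])
  thus ?thesis by (simp add: I_eq)
qed

lemma special:
  assumes zb: "\<beta> < Re z" and cz: "cos (of_real pi * z) = 0"
  shows "\<Phi> z - K_fun \<Phi> z = I_fun \<beta> \<Phi> z"
proof -
  have I0: "I_fun \<beta> \<Phi> z = 0" by (simp add: I_fun_def Let_def cz)
  obtain m where m: "m \<ge> 1" "z = Cn m" using cos_zero_Cn[of z] cz zb beta by auto
  have tm: "(-1) ^ n * (\<Phi> (of_nat n - 1/2) * cos_div (of_nat n - 1/2) z
          - \<Phi> (of_nat n - 1/2) * cos_div (- (of_nat n - 1/2)) z) = (if n = m then of_real pi * \<Phi> z else 0)"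
    if n: "n \<ge> 1" for n
  proof -
    have c: "of_nat n - 1/2 = Cn n" by (simp add: Cn_def)
    have neg: "Cn m \<noteq> - Cn n" using m n by (auto simp: complex_eq_iff Re_Cn)
    have d2: "cos_div (- Cn n) (Cn m) = 0" using neg by (simp add: cos_div_def cos_Cn)
    show ?thesis
    proof (cases "n = m")
      case True
      have e1: "cos_div (Cn m) (Cn m) = of_real pi * (-1)^m" by (simp add: cos_div_def sin_Cn)
      have pp: "(-1::complex)^m * (-1)^m = 1" by (simp add: power_mult_distrib[symmetric])
      have d2': "cos_div (- Cn m) (Cn m) = 0" using d2 True by simp
      have "(-1) ^ m * (\<Phi> (Cn m) * cos_div (Cn m) (Cn m) - \<Phi> (Cn m) * cos_div (- Cn m) (Cn m))
          = (-1)^m * (\<Phi> (Cn m) * (of_real pi * (-1)^m))" by (simp add: e1 d2')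
      also have "\<dots> = of_real pi * \<Phi> (Cn m) * ((-1)^m * (-1)^m)" by (simp add: mult_ac)
      also have "\<dots> = of_real pi * \<Phi> (Cn m)" by (simp add: pp)
      finally show ?thesis unfolding c using True m by simp
    next
      case False
      hence "Cn m \<noteq> Cn n" using inj_Cn by (auto simp: inj_def)
      hence "cos_div (Cn n) (Cn m) = 0" by (simp add: cos_div_def cos_Cn)
      thus ?thesis unfolding c using False d2 m by simp
    qed
  qed
  have ev: "\<forall>\<^sub>F N in sequentially. \<Phi> z = (1 / of_real pi) *
      (\<Sum>n=1..N. (-1) ^ n *
         (\<Phi> (of_nat n - 1/2) * cos_div (of_nat n - 1/2) z
          - \<Phi> (of_nat n - 1/2) * cos_div (- (of_nat n - 1/2)) z))"
    using eventually_ge_at_top[of m]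
  proof eventually_elim
    case (elim N)
    have "(\<Sum>n=1..N. (-1) ^ n *
         (\<Phi> (of_nat n - 1/2) * cos_div (of_nat n - 1/2) z
          - \<Phi> (of_nat n - 1/2) * cos_div (- (of_nat n - 1/2)) z)) = (\<Sum>n=1..N. (if n = m then of_real pi * \<Phi> z else 0))"
      by (rule sum.cong[OF refl]) (rule tm, simp)
    also have "\<dots> = of_real pi * \<Phi> z" using elim m by simp
    finally show ?case by simp
  qed
  have "K_fun \<Phi> z = \<Phi> z"
    unfolding K_fun_def by (rule limI[OF Lim_transform_eventually[OF tendsto_const ev]])
  thus ?thesis using I0 by simp
qed

end


theorem lemma3p4:
  fixes \<Phi> :: "complex \<Rightarrow> complex" and \<beta> :: real
  assumes holo: "\<Phi> holomorphic_on {z. Re z > 0}"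
    and cond_a: "\<And>a b. 0 < a \<Longrightarrow> a < b \<Longrightarrow>
        ((\<lambda>y. ennreal (exp (- pi * \<bar>y\<bar>)) *
            (\<integral>\<^sup>+ x\<in>{a..b}. ennreal (cmod (\<Phi> (Complex x y) / Complex x y)) \<partial>lborel))
          \<longlongrightarrow> 0) at_top
      \<and> ((\<lambda>y. ennreal (exp (- pi * \<bar>y\<bar>)) *
            (\<integral>\<^sup>+ x\<in>{a..b}. ennreal (cmod (\<Phi> (Complex x y) / Complex x y)) \<partial>lborel))
          \<longlongrightarrow> 0) at_bot"
    and cond_b: "\<And>\<eta>. \<eta> > 0 \<Longrightarrow>
        (SUP x\<in>{\<eta>..}. \<integral>\<^sup>+ y. ennreal (cmod (\<Phi> (Complex x y) / Complex x y) * exp (- pi * \<bar>y\<bar>)) \<partial>lborel) < \<infinity>"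
    and cond_c: "((\<lambda>x. \<integral>\<^sup>+ y. ennreal (cmod (\<Phi> (Complex x y) / Complex x y) * exp (- pi * \<bar>y\<bar>)) \<partial>lborel)
          \<longlongrightarrow> 0) at_top"
    and beta: "0 < \<beta>" "\<beta> < 1/2"
  shows "(\<forall>z. Re z > \<beta> \<longrightarrow> \<Phi> z - K_fun \<Phi> z = I_fun \<beta> \<Phi> z)
       \<and> (\<forall>z. \<bar>Re z\<bar> < \<beta> \<longrightarrow> - K_fun \<Phi> z = I_fun \<beta> \<Phi> z)"
proof -
  have loc: "phi_setup \<Phi> \<beta>"
    unfolding phi_setup_def using holo cond_a cond_b cond_c beta by blast
  interpret phi_setup \<Phi> \<beta> by (rule loc)
  show ?thesis
  proof (intro conjI allI impI)
    fix z assume z: "Re z > \<beta>"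
    show "\<Phi> z - K_fun \<Phi> z = I_fun \<beta> \<Phi> z"
    proof (cases "cos (of_real pi * z) = 0")
      case True
      thus ?thesis by (rule special[OF z])
    next
      case False
      have zb: "Re z \<noteq> \<beta>" "-\<beta> < Re z" using z beta by auto
      from general[OF zb False] z show ?thesis by simp
    qed
  next
    fix z assume z: "\<bar>Re z\<bar> < \<beta>"
    have zb: "Re z \<noteq> \<beta>" "-\<beta> < Re z" using z by auto
    have "\<bar>Re z\<bar> < 1/2" using z beta by simp
    hence cz: "cos (of_real pi * z) \<noteq> 0" by (rule cos_nz_strip)
    from general[OF zb cz] z show "- K_fun \<Phi> z = I_fun \<beta> \<Phi> z" by simp
  qed
qed

end
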